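(* Let $p\ge1$ and $n>p$ be integers, and let $\Lambda\in\mathbb R$. Let $z\not\equiv0$ be a real even eigenfunction of order $n$ with eigenvalue $\Lambda$. Then: 1. $\Lambda>0$. 2. Put $\lambda^2=\Lambda^{1/p}>0$, and for $-1\le k\le n-p-1$ set $$h^k=(-1)^kL^{2n-2k-2}(\Lambda)z.$$ In particular $h^{-1}=-L^{2n}(\Lambda)z=0$ and $h^0=c$ is the constant $L^{2n-2}(\Lambda)z$. Then for every integer $k$ with $0\le k\le n-p-1$, $$(-1)^{k-1}\int_{-1}^1 z\,h^{k-1}\,dx-(-1)^k\lambda^2\int_{-1}^1 z\,h^{k}\,dx>0 .$$ 3. In particular (the case $k=0$), $c\int_{-1}^1 z\,dx<0$.
   Context: Fix an integer $p\ge1$. For an integer $k\ge p$ and real $\Lambda$, the differential operator on $[-1,1]$ is $$L^{2k}(\Lambda)=(-1)^k\frac{d^{2k}}{dx^{2k}}-\Lambda(-1)^{k-p}\frac{d^{2k-2p}}{dx^{2k-2p}}.$$ A real function $z\in C^{2n}[-1,1]$, $z\not\equiv0$, is an eigenfunction of order $n$ with eigenvalue $\Lambda$ if: - $L^{2n}(\Lambda)z=0$ on $[-1,1]$, and - $z^{(j)}(\pm1)=0$ for $j=0,\dots,n-1$. *)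

theory Defs
  imports "HOL-Analysis.Analysis"
begin

text \<open>A function z in C^m[-1,1] is represented together with its derivatives:
  D 0 = z on [-1,1], D (j+1) is the (one-sided at the endpoints) derivative of D j
  within [-1,1] for j < m, and D m is continuous on [-1,1].  Since [-1,1] is perfect,
  the D j are uniquely determined by z on [-1,1].\<close>
definition Cm_derivs :: "nat \<Rightarrow> (real \<Rightarrow> real) \<Rightarrow> (nat \<Rightarrow> real \<Rightarrow> real) \<Rightarrow> bool" where
  "Cm_derivs m z D \<longleftrightarrow>
     (\<forall>x\<in>{-1..1}. D 0 x = z x) \<and>
     (\<forall>j<m. \<forall>x\<in>{-1..1}. (D j has_real_derivative D (Suc j) x) (at x within {-1..1})) \<and>
     continuous_on {-1..1} (D m)"

definition Lop :: "nat \<Rightarrow> real \<Rightarrow> nat \<Rightarrow> (nat \<Rightarrow> real \<Rightarrow> real) \<Rightarrow> real \<Rightarrow> real" where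
  "Lop p \<Lambda> k D x = (-1) ^ k * D (2 * k) x - \<Lambda> * (-1) ^ (k - p) * D (2 * k - 2 * p) x"

definition is_eigenfunction ::
  "nat \<Rightarrow> nat \<Rightarrow> real \<Rightarrow> (real \<Rightarrow> real) \<Rightarrow> (nat \<Rightarrow> real \<Rightarrow> real) \<Rightarrow> bool" where
  "is_eigenfunction p n \<Lambda> z D \<longleftrightarrow>
     Cm_derivs (2 * n) z D \<and>
     (\<exists>x\<in>{-1..1}. z x \<noteq> 0) \<and>
     (\<forall>x\<in>{-1..1}. Lop p \<Lambda> n D x = 0) \<and>
     (\<forall>j<n. D j (-1) = 0 \<and> D j 1 = 0)"

definition hfun :: "nat \<Rightarrow> real \<Rightarrow> nat \<Rightarrow> (nat \<Rightarrow> real \<Rightarrow> real) \<Rightarrow> int \<Rightarrow> real \<Rightarrow> real" where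
  "hfun p \<Lambda> n D k x = (-1) powi k * Lop p \<Lambda> (nat (int n - k - 1)) D x"

end

theory Submission imports Defs begin

locale eig =
  fixes n :: nat and z :: "real \<Rightarrow> real" and D :: "nat \<Rightarrow> real \<Rightarrow> real"
  assumes cm: "Cm_derivs (2*n) z D"
    and bc: "\<forall>j<n. D j (-1) = 0 \<and> D j 1 = 0"
begin

lemma D0: "x \<in> {-1..1} \<Longrightarrow> D 0 x = z x"
  using cm unfolding Cm_derivs_def by auto

lemma der: "j < 2*n \<Longrightarrow> x \<in> {-1..1} \<Longrightarrow> (D j has_real_derivative D (Suc j) x) (at x within {-1..1})"
  using cm unfolding Cm_derivs_def by auto

lemma cont: "j \<le> 2*n \<Longrightarrow> continuous_on {-1..1} (D j)"
proof (cases "j = 2*n")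
  case True then show ?thesis using cm unfolding Cm_derivs_def by auto
next
  case False
  assume "j \<le> 2*n"
  with False have "j < 2*n" by simp
  then show ?thesis
    unfolding continuous_on_eq_continuous_within
    using der DERIV_continuous by blast
qed

definition I :: "nat \<Rightarrow> nat \<Rightarrow> real" where
  "I i j = integral {-1..1} (\<lambda>x. D i x * D j x)"

lemma intg: "i \<le> 2*n \<Longrightarrow> j \<le> 2*n \<Longrightarrow> (\<lambda>x. D i x * D j x) integrable_on {-1..1}"
  by (intro integrable_continuous_interval continuous_on_mult cont)

lemma I_sym: "I i j = I j i"
  unfolding I_def by (simp add: mult.commute)

lemma ibp:
  assumes "a < n" "Suc b \<le> 2*n"
  shows "I a (Suc b) = - I (Suc a) b"
proof -
  have "((\<lambda>x. D (Suc a) x * D b x + D a x * D (Suc b) x) has_integral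
        (D a 1 * D b 1 - D a (-1) * D b (-1))) {-1..1}"
  proof (rule fundamental_theorem_of_calculus)
    fix x :: real assume x: "x \<in> {-1..1}"
    have "((\<lambda>x. D a x * D b x) has_real_derivative (D (Suc a) x * D b x + D a x * D (Suc b) x))
           (at x within {-1..1})"
      using der[of a x] der[of b x] assms x
      by (auto intro!: derivative_eq_intros)
    then show "((\<lambda>x. D a x * D b x) has_vector_derivative (D (Suc a) x * D b x + D a x * D (Suc b) x))
           (at x within {-1..1})"
      by (simp add: has_real_derivative_iff_has_vector_derivative)
  qed simp
  moreover have "D a 1 * D b 1 - D a (-1) * D b (-1) = 0" using bc assms by simp
  ultimately have "integral {-1..1} (\<lambda>x. D (Suc a) x * D b x + D a x * D (Suc b) x) = 0"
    by (simp add: integral_unique)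
  moreover have "integral {-1..1} (\<lambda>x. D (Suc a) x * D b x + D a x * D (Suc b) x)
      = I (Suc a) b + I a (Suc b)"
    unfolding I_def using assms by (intro integral_add intg) auto
  ultimately show ?thesis by simp
qed

lemma shift: "M \<le> n \<Longrightarrow> t \<le> M \<Longrightarrow> I 0 (2*M) = (-1)^t * I t (2*M - t)"
proof (induction t)
  case 0 then show ?case by simp
next
  case (Suc t)
  have e: "2*M - t = Suc (2*M - Suc t)" using Suc.prems by simp
  have "I t (2*M - t) = - I (Suc t) (2*M - Suc t)"
    unfolding e using Suc.prems by (intro ibp) auto
  then show ?case using Suc by simp
qed

lemma I0: "M \<le> n \<Longrightarrow> I 0 (2*M) = (-1)^M * I M M"
  using shift[of M M] by (simp add: mult_2)

lemma I_r2: "r < n \<Longrightarrow> I (Suc (Suc r)) r = - I (Suc r) (Suc r)"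
  using ibp[of r "Suc r"] I_sym by simp

lemma zero_down:
  assumes "j \<le> n" "\<forall>x\<in>{-1..1}. D j x = 0"
  shows "\<forall>x\<in>{-1..1}. z x = 0"
  using assms
proof (induction j)
  case 0 then show ?case using D0 by auto
next
  case (Suc j)
  have "\<exists>c. \<forall>x\<in>{-1..1}. D j x = c"
  proof (rule has_field_derivative_zero_constant)
    fix x :: real assume x: "x \<in> {-1..1}"
    show "(D j has_field_derivative 0) (at x within {-1..1})"
      using der[of j x] Suc.prems x by (metis Suc_le_lessD less_le_trans mult_2 trans_less_add1)
  qed simp
  then obtain c where c: "\<forall>x\<in>{-1..1}. D j x = c" by blast
  have "D j 1 = 0" using bc Suc.prems by simp
  then have "\<forall>x\<in>{-1..1}. D j x = 0" using c by auto
  then show ?case using Suc by simp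
qed

lemma I_nonneg: "j \<le> 2*n \<Longrightarrow> I j j \<ge> 0"
  unfolding I_def by (intro integral_nonneg intg) auto

lemma I_pos:
  assumes "j \<le> n" "\<exists>x\<in>{-1..1}. z x \<noteq> 0"
  shows "I j j > 0"
proof -
  have c: "continuous_on {-1..1} (\<lambda>x. D j x * D j x)"
    using assms by (intro continuous_on_mult cont) auto
  have "I j j \<noteq> 0"
  proof
    assume "I j j = 0"
    then have "\<forall>x\<in>{-1..1}. D j x * D j x = 0"
      using integral_eq_0_iff[OF c, of ] unfolding I_def by simp
    then have "\<forall>x\<in>{-1..1}. z x = 0" using zero_down assms by simp
    then show False using assms by blast
  qed
  then show ?thesis using I_nonneg[of j] assms by simp
qed


lemma int_Lop:
  assumes "M \<le> n" "p \<le> M"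
  shows "integral {-1..1} (\<lambda>x. z x * Lop p \<Lambda> M D x) = I M M - \<Lambda> * I (M-p) (M-p)"
proof -
  have "integral {-1..1} (\<lambda>x. z x * Lop p \<Lambda> M D x)
      = integral {-1..1} (\<lambda>x. (-1)^M * (D 0 x * D (2*M) x) - (\<Lambda> * (-1)^(M-p)) * (D 0 x * D (2*(M-p)) x))"
    by (rule integral_cong) (auto simp: D0 Lop_def algebra_simps right_diff_distrib')
  also have "\<dots> = (-1)^M * I 0 (2*M) - (\<Lambda> * (-1)^(M-p)) * I 0 (2*(M-p))"
    unfolding I_def using assms
    by (subst integral_diff) (auto intro!: integrable_on_mult_right intg simp del: mult_minus_left)
  also have "\<dots> = I M M - \<Lambda> * I (M-p) (M-p)"
    using assms I0[of M] I0[of "M-p"]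
    by (simp add: mult.assoc flip: power_add)
  finally show ?thesis .
qed

lemma T_eq:
  assumes "Suc (Suc r) \<le> n"
  shows "integral {-1..1} (\<lambda>x. (D (Suc (Suc r)) x + l * D r x)^2)
     = I (Suc (Suc r)) (Suc (Suc r)) - 2*l*I (Suc r) (Suc r) + l^2 * I r r"
proof -
  have "integral {-1..1} (\<lambda>x. (D (Suc (Suc r)) x + l * D r x)^2)
     = integral {-1..1} (\<lambda>x. D (Suc (Suc r)) x * D (Suc (Suc r)) x + (2*l) * (D (Suc (Suc r)) x * D r x)
        + l^2 * (D r x * D r x))"
    by (simp add: power2_eq_square algebra_simps)
  also have "\<dots> = I (Suc (Suc r)) (Suc (Suc r)) + 2*l*I (Suc (Suc r)) r + l^2 * I r r"
    unfolding I_def using assms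
    by (simp add: integral_add integrable_add integrable_on_mult_right intg)
  finally show ?thesis using I_r2[of r] assms by simp
qed

lemma energy:
  assumes "Suc (Suc r) \<le> n" "l > 0" "\<forall>x\<in>{-1..1}. D (Suc (Suc r)) x + l * D r x = 0"
  shows "\<forall>x\<in>{-1..1}. D r x = 0"
proof -
  have "\<exists>c. \<forall>x\<in>{-1..1}. (D (Suc r) x)^2 + l * (D r x)^2 = c"
  proof (rule has_field_derivative_zero_constant)
    fix x :: real assume x: "x \<in> {-1..1}"
    have "((\<lambda>x. (D (Suc r) x)^2 + l * (D r x)^2) has_field_derivative
        (2 * D (Suc r) x * (D (Suc (Suc r)) x + l * D r x))) (at x within {-1..1})"
      using der[of "Suc r" x] der[of r x] assms(1,2) x
      by (auto intro!: derivative_eq_intros simp: algebra_simps)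
    then show "((\<lambda>x. (D (Suc r) x)^2 + l * (D r x)^2) has_field_derivative 0) (at x within {-1..1})"
      using assms x by simp
  qed simp
  then obtain c where c: "\<forall>x\<in>{-1..1}. (D (Suc r) x)^2 + l * (D r x)^2 = c" by blast
  have "D (Suc r) 1 = 0" "D r 1 = 0" using bc assms by auto
  then have "c = 0" using c[rule_format, of 1] by simp
  show ?thesis
  proof
    fix x :: real assume x: "x \<in> {-1..1}"
    have "(D (Suc r) x)^2 + l * (D r x)^2 = 0" using c x \<open>c = 0\<close> by auto
    moreover have "(D (Suc r) x)^2 \<ge> 0" "l * (D r x)^2 \<ge> 0" using assms by auto
    ultimately have "l * (D r x)^2 = 0" by linarith
    then show "D r x = 0" using assms by simp
  qed
qed

lemma T_pos:
  assumes "Suc (Suc r) \<le> n" "l > 0" "\<exists>x\<in>{-1..1}. z x \<noteq> 0"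
  shows "I (Suc (Suc r)) (Suc (Suc r)) - 2*l*I (Suc r) (Suc r) + l^2 * I r r > 0"
proof -
  have c: "continuous_on {-1..1} (\<lambda>x. (D (Suc (Suc r)) x + l * D r x)^2)"
    using assms by (intro continuous_intros cont) auto
  have ne: "integral {-1..1} (\<lambda>x. (D (Suc (Suc r)) x + l * D r x)^2) \<noteq> 0"
  proof
    assume "integral {-1..1} (\<lambda>x. (D (Suc (Suc r)) x + l * D r x)^2) = 0"
    then have "\<forall>x\<in>{-1..1}. D (Suc (Suc r)) x + l * D r x = 0"
      using integral_eq_0_iff[OF c] by simp
    then have "\<forall>x\<in>{-1..1}. D r x = 0" using energy assms by blast
    then have "\<forall>x\<in>{-1..1}. z x = 0" using zero_down[of r] assms by simp
    then show False using assms by blast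
  qed
  have "integral {-1..1} (\<lambda>x. (D (Suc (Suc r)) x + l * D r x)^2) \<ge> 0"
    using c by (intro integral_nonneg integrable_continuous_interval) auto
  then show ?thesis using ne T_eq[OF assms(1)] by simp
qed


lemma core:
  assumes "p \<ge> 1" "p \<le> m" "Suc m \<le> n" "l > 0" "\<exists>x\<in>{-1..1}. z x \<noteq> 0"
  shows "(I (Suc m) (Suc m) - l^p * I (Suc m - p) (Suc m - p)) - l * (I m m - l^p * I (m-p) (m-p)) > 0"
proof -
  define s where "s = m - p"
  obtain q where pq: "p = Suc q" using assms by (cases p) auto
  define b where "b j = I j j" for j
  define T where "T r = b (Suc (Suc r)) - 2*l*b (Suc r) + l^2 * b r" for r
  have Tnn: "\<And>i. i \<le> q \<Longrightarrow> T (s+i) \<ge> 0"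
  proof -
    fix i assume "i \<le> q"
    then have "Suc (Suc (s+i)) \<le> n" using assms pq s_def by simp
    then show "T (s+i) \<ge> 0" unfolding T_def b_def using T_pos[of "s+i" l] assms by simp
  qed
  have V: "\<And>j. j \<le> q \<Longrightarrow> 0 \<le> (b (s+j+1) - l * b (s+j)) - l^j * (b (s+1) - l * b s)"
  proof -
    fix j show "j \<le> q \<Longrightarrow> 0 \<le> (b (s+j+1) - l * b (s+j)) - l^j * (b (s+1) - l * b s)"
    proof (induction j)
      case 0 then show ?case by simp
    next
      case (Suc j)
      have "(b (s+Suc j+1) - l * b (s+Suc j)) - l^Suc j * (b (s+1) - l * b s)
          = l * ((b (s+j+1) - l * b (s+j)) - l^j * (b (s+1) - l * b s)) + T (s+j)"
        unfolding T_def by (simp add: algebra_simps power2_eq_square)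
      moreover have "T (s+j) \<ge> 0" using Tnn Suc.prems by simp
      ultimately show ?case using Suc assms(4) by simp
    qed
  qed
  have Tq: "T (s+q) > 0"
    unfolding T_def b_def using assms pq s_def by (intro T_pos) auto
  have "(b (s+Suc q+1) - l * b (s+Suc q)) - l^Suc q * (b (s+1) - l * b s)
          = l * ((b (s+q+1) - l * b (s+q)) - l^q * (b (s+1) - l * b s)) + T (s+q)"
    unfolding T_def by (simp add: algebra_simps power2_eq_square)
  moreover have "0 \<le> l * ((b (s+q+1) - l * b (s+q)) - l^q * (b (s+1) - l * b s))"
    using V[of q] assms(4) by simp
  ultimately have "(b (s+Suc q+1) - l * b (s+Suc q)) - l^Suc q * (b (s+1) - l * b s) > 0"
    using Tq by linarith
  moreover have "s + Suc q + 1 = Suc m" "s + Suc q = m" "Suc m - p = s + 1" "m - p = s"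
    using assms pq s_def by auto
  ultimately show ?thesis unfolding b_def pq by (simp add: algebra_simps)
qed

lemma parity:
  assumes "\<forall>x\<in>{-1..1}. z (-x) = z x" "j \<le> 2*n" "x \<in> {-1..1}"
  shows "D j (-x) = (-1)^j * D j x"
  using assms(2,3)
proof (induction j arbitrary: x)
  case 0 then show ?case using D0 assms(1) by auto
next
  case (Suc j)
  have jl: "j < 2*n" using Suc.prems by simp
  have mx: "-x \<in> {-1..1}" using Suc.prems by auto
  have img: "uminus ` {-1..1::real} = {-1..1}" by auto
  have "(D j has_real_derivative D (Suc j) (-x)) (at (uminus x) within (uminus ` {-1..1}))"
    using der[OF jl mx] img by simp
  from DERIV_image_chain[OF this DERIV_minus[OF DERIV_ident]]
  have d1: "((\<lambda>x. D j (-x)) has_real_derivative - D (Suc j) (-x)) (at x within {-1..1})"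
    by (simp add: o_def)
  have d2: "((\<lambda>x. (-1)^j * D j x) has_real_derivative (-1)^j * D (Suc j) x) (at x within {-1..1})"
    using der[OF jl Suc.prems(2)] by (auto intro!: derivative_eq_intros)
  have d1': "((\<lambda>x. (-1)^j * D j x) has_real_derivative - D (Suc j) (-x)) (at x within {-1..1})"
    using d1 Suc.IH jl Suc.prems(2)
    by (intro has_field_derivative_transform_within[OF d1, of 1]) (auto simp: dist_real_def)
  have "- D (Suc j) (-x) = (-1)^j * D (Suc j) x"
    using vector_derivative_unique_within_closed_interval[of "-1" 1 x]
      d1' d2 Suc.prems(2) by (auto simp: has_real_derivative_iff_has_vector_derivative)
  then show ?case by simp
qed

end


lemma powi_sq: "((-1::real) powi j) * ((-1) powi j) = 1"
  by (simp flip: power_int_mult_distrib)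

lemma int_c: "integral {-1..1} (\<lambda>x. z x * (c * f x)) = (c::real) * integral {-1..1} (\<lambda>x. z x * f x)"
  by (simp add: mult.left_commute)

lemma powr_p: "\<Lambda> > 0 \<Longrightarrow> p \<ge> 1 \<Longrightarrow> (\<Lambda> powr (1 / real p)) ^ p = (\<Lambda>::real)"
  by (simp add: powr_realpow[symmetric] powr_powr)

theorem mainTheorem4:
  fixes p n :: nat and \<Lambda> :: real and z :: "real \<Rightarrow> real" and D :: "nat \<Rightarrow> real \<Rightarrow> real"
  assumes "p \<ge> 1" and "n > p"
    and "is_eigenfunction p n \<Lambda> z D"
    and "\<forall>x\<in>{-1..1}. z (-x) = z x"
  shows "\<Lambda> > 0 \<and>
    (\<forall>k::int. 0 \<le> k \<and> k \<le> int n - int p - 1 \<longrightarrow>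
       (-1) powi (k - 1) * integral {-1..1} (\<lambda>x. z x * hfun p \<Lambda> n D (k - 1) x)
       - (-1) powi k * (\<Lambda> powr (1 / real p)) * integral {-1..1} (\<lambda>x. z x * hfun p \<Lambda> n D k x) > 0) \<and>
    (\<exists>c::real. (\<forall>x\<in>{-1..1}. hfun p \<Lambda> n D 0 x = c) \<and> c * integral {-1..1} z < 0)"
proof -
  note E = assms(3)[unfolded is_eigenfunction_def]
  have cm: "Cm_derivs (2 * n) z D" and nz: "\<exists>x\<in>{-1..1}. z x \<noteq> 0"
    and eq: "\<forall>x\<in>{-1..1}. Lop p \<Lambda> n D x = 0" and bc: "\<forall>j<n. D j (-1) = 0 \<and> D j 1 = 0"
    using E by auto
  interpret eig n z D using cm bc by unfold_locales
  have "integral {-1..1} (\<lambda>x. z x * Lop p \<Lambda> n D x) = 0"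
  proof -
    have "integral {-1..1} (\<lambda>x. z x * Lop p \<Lambda> n D x) = integral {-1..1} (\<lambda>x::real. 0::real)"
      by (intro Henstock_Kurzweil_Integration.integral_cong) (use eq in auto)
    then show ?thesis by simp
  qed
  then have e0: "I n n - \<Lambda> * I (n-p) (n-p) = 0" using int_Lop[of n p \<Lambda>] assms by simp
  have p1: "I n n > 0" "I (n-p) (n-p) > 0" using I_pos nz by auto
  have Lpos: "\<Lambda> > 0"
  proof (rule ccontr)
    assume "\<not> \<Lambda> > 0"
    then have "\<Lambda> * I (n-p) (n-p) \<le> 0" using p1 by (simp add: mult_nonpos_nonneg)
    then show False using e0 p1 by simp
  qed
  define l where "l = \<Lambda> powr (1 / real p)"
  have lpos: "l > 0" using Lpos l_def by simp
  have lp: "l ^ p = \<Lambda>" using powr_p[OF Lpos assms(1)] l_def by simp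
  have P2: "\<forall>k::int. 0 \<le> k \<and> k \<le> int n - int p - 1 \<longrightarrow>
       (-1) powi (k - 1) * integral {-1..1} (\<lambda>x. z x * hfun p \<Lambda> n D (k - 1) x)
       - (-1) powi k * l * integral {-1..1} (\<lambda>x. z x * hfun p \<Lambda> n D k x) > 0"
  proof (intro allI impI)
    fix k :: int assume k: "0 \<le> k \<and> k \<le> int n - int p - 1"
    define kk where "kk = nat k"
    define m where "m = n - kk - 1"
    have km: "nat (int n - (k - 1) - 1) = Suc m" "nat (int n - k - 1) = m" "p \<le> m" "Suc m \<le> n"
      using k assms unfolding m_def kk_def by auto
    have "(-1) powi (k - 1) * integral {-1..1} (\<lambda>x. z x * hfun p \<Lambda> n D (k - 1) x)
        = integral {-1..1} (\<lambda>x. z x * Lop p \<Lambda> (Suc m) D x)"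
      unfolding hfun_def km int_c by (simp add: mult.assoc[symmetric] powi_sq)
    moreover have "(-1) powi k * l * integral {-1..1} (\<lambda>x. z x * hfun p \<Lambda> n D k x)
        = l * integral {-1..1} (\<lambda>x. z x * Lop p \<Lambda> m D x)"
      unfolding hfun_def km int_c by (simp add: mult.assoc[symmetric] powi_sq mult.commute[of _ l])
    moreover have "integral {-1..1} (\<lambda>x. z x * Lop p \<Lambda> (Suc m) D x) - l * integral {-1..1} (\<lambda>x. z x * Lop p \<Lambda> m D x) > 0"
      using int_Lop[of "Suc m" p \<Lambda>] int_Lop[of m p \<Lambda>] km core[of p m l] assms(1) lpos nz lp
      by simp
    ultimately show "(-1) powi (k - 1) * integral {-1..1} (\<lambda>x. z x * hfun p \<Lambda> n D (k - 1) x)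
       - (-1) powi k * l * integral {-1..1} (\<lambda>x. z x * hfun p \<Lambda> n D k x) > 0" by linarith
  qed
  obtain N where nN: "n = Suc N" using assms by (cases n) auto
  have pN: "p \<le> N" using assms nN by simp
  define g where "g x = (-1)^N * D (Suc (2*N)) x - \<Lambda> * (-1)^(N-p) * D (Suc (2*N-2*p)) x" for x
  have dL: "((\<lambda>x. Lop p \<Lambda> N D x) has_real_derivative g x) (at x within {-1..1})" if x: "x \<in> {-1..1}" for x
    unfolding Lop_def g_def using der[of "2*N" x] der[of "2*N-2*p" x] x nN
    by (auto intro!: derivative_eq_intros)
  have dg: "(g has_real_derivative 0) (at x within {-1..1})" if x: "x \<in> {-1..1}" for x
  proof -
    have "(g has_real_derivative (-1)^N * D (Suc (Suc (2*N))) x - \<Lambda> * (-1)^(N-p) * D (Suc (Suc (2*N-2*p))) x)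
        (at x within {-1..1})"
      unfolding g_def using der[of "Suc (2*N)" x] der[of "Suc (2*N-2*p)" x] x nN pN
      by (auto intro!: derivative_eq_intros)
    moreover have "(-1)^N * D (Suc (Suc (2*N))) x - \<Lambda> * (-1)^(N-p) * D (Suc (Suc (2*N-2*p))) x
        = - Lop p \<Lambda> n D x"
    proof -
      have "Suc (Suc (2*N)) = 2*n" "Suc (Suc (2*N-2*p)) = 2*n - 2*p" "n - p = Suc (N-p)"
        using nN pN by auto
      then show ?thesis unfolding Lop_def nN by simp
    qed
    ultimately show ?thesis using eq x by simp
  qed
  obtain g0 where g0: "\<forall>x\<in>{-1..1}. g x = g0"
    using has_field_derivative_zero_constant[of "{-1..1::real}" g] dg by auto
  have odd0: "D (Suc (2*j)) 0 = 0" if "Suc (2*j) \<le> 2*n" for j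
    using parity[OF assms(4) that, of 0] by simp
  have "g 0 = 0" unfolding g_def using odd0[of N] odd0[of "N-p"] nN pN
    by (simp add: Suc_diff_le[symmetric] right_diff_distrib')
  then have g00: "\<forall>x\<in>{-1..1}. g x = 0" using g0 by auto
  obtain c where c: "\<forall>x\<in>{-1..1}. Lop p \<Lambda> N D x = c"
    using has_field_derivative_zero_constant[of "{-1..1::real}" "\<lambda>x. Lop p \<Lambda> N D x"] dL g00 by force
  have hc: "\<forall>x\<in>{-1..1}. hfun p \<Lambda> n D 0 x = c"
    using c nN by (simp add: hfun_def)
  have "c * integral {-1..1} z = integral {-1..1} (\<lambda>x. z x * Lop p \<Lambda> N D x)"
  proof -
    have "integral {-1..1} (\<lambda>x. z x * Lop p \<Lambda> N D x) = integral {-1..1} (\<lambda>x. c * z x)"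
      by (intro Henstock_Kurzweil_Integration.integral_cong) (use c in auto)
    then show ?thesis by simp
  qed
  also have "\<dots> = I N N - \<Lambda> * I (N-p) (N-p)" using int_Lop[of N p \<Lambda>] pN nN by simp
  finally have ci: "c * integral {-1..1} z = I N N - \<Lambda> * I (N-p) (N-p)" .
  have "(I (Suc N) (Suc N) - l^p * I (Suc N - p) (Suc N - p)) - l * (I N N - l^p * I (N-p) (N-p)) > 0"
    using core[of p N l] assms(1) pN nN lpos nz by simp
  then have "l * (I N N - \<Lambda> * I (N-p) (N-p)) < 0" using e0 lp nN by simp
  then have "I N N - \<Lambda> * I (N-p) (N-p) < 0" using lpos by (simp add: mult_less_0_iff)
  then have P3: "\<exists>c::real. (\<forall>x\<in>{-1..1}. hfun p \<Lambda> n D 0 x = c) \<and> c * integral {-1..1} z < 0"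
    using hc ci by auto
  show ?thesis using Lpos P2 P3 unfolding l_def by blast
qed

end
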